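(* Let $Y$ be the set of functions $F(\gamma)=f(\gamma(s_1),\dots,\gamma(s_k))$, $\gamma\in C_0([0,1];\mathbb R^d)$, where $k\in\mathbb N$, $0<s_1<\dots<s_k=1$ with $s_1,\dots,s_k\in\{l/2^n:l\in\{1,\dots,2^n\}\}$ for some $n\in\mathbb N$, and $f\in C^\infty_p((\mathbb R^d)^k)$; and let $\tilde Y$ be the set of functions $F(\gamma)=f(\langle S_1,\gamma\rangle,\dots,\langle S_k,\gamma\rangle)$ with $k\in\mathbb N$, $f\in C^\infty_p(\mathbb R^k)$. Then $Y=\tilde Y$.
   Context: Fix $d\in\mathbb N$, $(e_j)$ standard basis of $\mathbb R^d$. $C_0([0,1];\mathbb R^d)$ is the space of continuous $\gamma:[0,1]\to\mathbb R^d$ with $\gamma(0)=0$. $C^\infty_p(\mathbb R^N)$ denotes the infinitely differentiable real functions all of whose partial derivatives are of at most polynomial growth. Haar functions: $H_1\equiv1$, and for $m\ge0$, $k=1,\dots,2^m$: $H_{2^m+k}=2^{m/2}$ on $[\frac{2k-2}{2^{m+1}},\frac{2k-1}{2^{m+1}})$, $-2^{m/2}$ on $[\frac{2k-1}{2^{m+1}},\frac{2k}{2^{m+1}})$, $0$ otherwise. $g_{d(r-1)+j}:=H_re_j$ ($r\in\mathbb N$, $1\le j\le d$), $S_i(s):=\int_0^sg_i(u)du$, and $\langle S_i,\gamma\rangle:=\int_0^1g_i(u)\cdot d\gamma_u$ (Stieltjes integral of the step function $g_i$). *)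

theory Defs
  imports "HOL-Analysis.Analysis"
begin

text \<open>Points of R^d are represented as functions nat => real whose
coordinates 0..d-1 are the (0-based) coordinates; coordinates >= d are 0.
Points of R^N (N = d*k or N = k) are likewise nat => real, and a function on R^N
is a function (nat => real) => real that only depends on the first N coordinates.\<close>

definition C0 :: "nat \<Rightarrow> (real \<Rightarrow> nat \<Rightarrow> real) set" where
  "C0 d = {\<gamma>. (\<forall>j<d. continuous_on {0..1} (\<lambda>t. \<gamma> t j)) \<and> (\<forall>j<d. \<gamma> 0 j = 0)
              \<and> (\<forall>t j. d \<le> j \<longrightarrow> \<gamma> t j = 0)}"

fun iter_pd :: "nat list \<Rightarrow> ((nat \<Rightarrow> real) \<Rightarrow> real) \<Rightarrow> (nat \<Rightarrow> real) \<Rightarrow> real" where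
  "iter_pd [] f = f"
| "iter_pd (i # is) f = (\<lambda>x. deriv (\<lambda>t. iter_pd is f (x(i := t))) (x i))"

definition normN :: "nat \<Rightarrow> (nat \<Rightarrow> real) \<Rightarrow> real" where
  "normN N x = sqrt (\<Sum>i<N. (x i)\<^sup>2)"

definition Cinf_p :: "nat \<Rightarrow> ((nat \<Rightarrow> real) \<Rightarrow> real) \<Rightarrow> bool" where
  "Cinf_p N f \<longleftrightarrow>
     (\<forall>x. f x = f (\<lambda>i. if i < N then x i else 0)) \<and>
     (\<forall>is. set is \<subseteq> {..<N} \<longrightarrow>
        (\<forall>x. \<forall>i<N. (\<lambda>t. iter_pd is f (x(i := t))) differentiable (at (x i))) \<and>
        continuous_on UNIV (iter_pd is f) \<and>
        (\<exists>C m. \<forall>x. \<bar>iter_pd is f x\<bar> \<le> C * (1 + normN N x) ^ m))"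

definition haar_mk :: "nat \<Rightarrow> nat \<Rightarrow> real \<Rightarrow> real" where
  "haar_mk m k u =
     (if (2*real k - 2) / 2^(m+1) \<le> u \<and> u < (2*real k - 1) / 2^(m+1) then 2 powr (real m / 2)
      else if (2*real k - 1) / 2^(m+1) \<le> u \<and> u < (2*real k) / 2^(m+1) then - (2 powr (real m / 2))
      else 0)"

definition haar :: "nat \<Rightarrow> real \<Rightarrow> real" where
  "haar r u = (if r = 1 then 1
     else (\<Sum>m<r. \<Sum>k\<in>{1..2^m}. if r = 2^m + k then haar_mk m k u else 0))"

definition stieltjes01 :: "(real \<Rightarrow> real) \<Rightarrow> (real \<Rightarrow> real) \<Rightarrow> real" where
  "stieltjes01 g c = lim (\<lambda>N. \<Sum>l<(2::nat)^N.
       g (real l / 2^N) * (c (real (l+1) / 2^N) - c (real l / 2^N)))"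

text \<open>Pairing <S_i, gamma> = int_0^1 g_i . d gamma, where g_{d(r-1)+j} = H_r e_j
(i >= 1, j in 1..d; in 0-based coordinates the component is (i-1) mod d).\<close>
definition pairing :: "nat \<Rightarrow> nat \<Rightarrow> (real \<Rightarrow> nat \<Rightarrow> real) \<Rightarrow> real" where
  "pairing d i \<gamma> = stieltjes01 (haar ((i - 1) div d + 1)) (\<lambda>t. \<gamma> t ((i - 1) mod d))"

definition Ycyl :: "nat \<Rightarrow> ((real \<Rightarrow> nat \<Rightarrow> real) \<Rightarrow> real) set" where
  "Ycyl d = {F. \<exists>(k::nat) (n::nat) (s::nat \<Rightarrow> real) f.
      k \<ge> 1 \<and> 0 < s 0 \<and> (\<forall>i j. i < j \<and> j < k \<longrightarrow> s i < s j) \<and> s (k - 1) = 1 \<and>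
      (\<forall>i<k. \<exists>l\<in>{1..(2::nat)^n}. s i = real l / 2^n) \<and>
      Cinf_p (d * k) f \<and>
      F = (\<lambda>\<gamma>. if \<gamma> \<in> C0 d
                then f (\<lambda>i. if i < d * k then \<gamma> (s (i div d)) (i mod d) else 0)
                else 0)}"

definition Ytilde :: "nat \<Rightarrow> ((real \<Rightarrow> nat \<Rightarrow> real) \<Rightarrow> real) set" where
  "Ytilde d = {F. \<exists>(k::nat) f. k \<ge> 1 \<and> Cinf_p k f \<and>
      F = (\<lambda>\<gamma>. if \<gamma> \<in> C0 d
                then f (\<lambda>i. if i < k then pairing d (Suc i) \<gamma> else 0)
                else 0)}"

end

theory Submission imports Defs begin

lemma tendsto_coordwise:
  fixes f :: "'a \<Rightarrow> 'b \<Rightarrow> real"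
  assumes "\<And>i. ((\<lambda>c. f c i) \<longlongrightarrow> l i) F"
  shows "(f \<longlongrightarrow> l) F"
proof -
  have "limitin (product_topology (\<lambda>i. euclidean) UNIV) f l F"
    using assms by (subst limitin_componentwise) auto
  then show ?thesis by (simp add: euclidean_product_topology)
qed

lemma mvt_any:
  fixes g g' :: "real \<Rightarrow> real"
  assumes "\<And>t. (g has_real_derivative g' t) (at t)"
  shows "\<exists>\<xi>. \<bar>\<xi> - a\<bar> \<le> \<bar>b - a\<bar> \<and> g b - g a = (b - a) * g' \<xi>"
proof (cases a b rule: linorder_cases)
  case less
  from MVT2[OF less, of g g'] assms obtain z where "a < z" "z < b" "g b - g a = (b - a) * g' z" by blast
  then show ?thesis by (intro exI[of _ z]) auto
next
  case equal then show ?thesis by auto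
next
  case greater
  from MVT2[OF greater, of g g'] assms obtain z where "b < z" "z < a" "g a - g b = (a - b) * g' z" by blast
  then show ?thesis by (intro exI[of _ z]) (auto simp: algebra_simps)
qed


definition pd :: "nat \<Rightarrow> ((nat \<Rightarrow> real) \<Rightarrow> real) \<Rightarrow> (nat \<Rightarrow> real) \<Rightarrow> real" where
  "pd j h = (\<lambda>x. deriv (\<lambda>t. h (x(j := t))) (x j))"

lemma iter_pd_Cons: "iter_pd (j # js) f = pd j (iter_pd js f)"
  by (simp add: pd_def)

definition zp :: "(nat \<Rightarrow> real) \<Rightarrow> (nat \<Rightarrow> real) \<Rightarrow> nat \<Rightarrow> real \<Rightarrow> nat \<Rightarrow> real" where
  "zp y v n s = (\<lambda>j. y j + (if j < n then s * v j else 0))"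

lemma pd_deriv:
  assumes "\<And>x. (\<lambda>t. h (x(j := t))) differentiable (at (x j))"
  shows "((\<lambda>t. h (x(j := t))) has_real_derivative pd j h (x(j := t))) (at t)"
proof -
  have "(\<lambda>t'. h ((x(j:=t))(j := t'))) differentiable (at ((x(j:=t)) j))" by (rule assms)
  then have "(\<lambda>t'. h (x(j := t'))) differentiable (at t)" by simp
  then have "((\<lambda>t'. h (x(j := t'))) has_real_derivative deriv (\<lambda>t'. h (x(j := t'))) t) (at t)"
    using DERIV_deriv_iff_real_differentiable by blast
  then show ?thesis by (simp add: pd_def)
qed

lemma step_coord:
  assumes diff: "\<And>x. (\<lambda>t. h (x(n := t))) differentiable (at (x n))"
  assumes cont: "continuous_on UNIV (pd n h)"
  shows "((\<lambda>s. h (zp y v (Suc n) s) - h (zp y v n s)) has_real_derivative v n * pd n h y) (at 0)"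
proof -
  have zS: "zp y v (Suc n) s = (zp y v n s)(n := y n + s * v n)" for s
    by (auto simp: zp_def fun_eq_iff)
  have zn: "(zp y v n s)(n := y n) = zp y v n s" for s
    by (auto simp: zp_def fun_eq_iff)
  have "\<exists>\<xi>. \<bar>\<xi> - y n\<bar> \<le> \<bar>(y n + s * v n) - y n\<bar> \<and>
      h ((zp y v n s)(n := y n + s * v n)) - h ((zp y v n s)(n := y n)) = ((y n + s * v n) - y n) * pd n h ((zp y v n s)(n := \<xi>))" for s
    by (rule mvt_any, rule pd_deriv[OF diff])
  then obtain \<xi> where \<xi>: "\<And>s. \<bar>\<xi> s - y n\<bar> \<le> \<bar>s * v n\<bar>"
    "\<And>s. h (zp y v (Suc n) s) - h (zp y v n s) = (s * v n) * pd n h ((zp y v n s)(n := \<xi> s))"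
    unfolding zS zn by (metis add_diff_cancel_left')
  have z0: "zp y v m 0 = y" for m by (auto simp: zp_def fun_eq_iff)
  define w where "w s = (zp y v n s)(n := \<xi> s)" for s
  have wl: "(w \<longlongrightarrow> y) (at 0)"
  proof (rule tendsto_coordwise)
    fix i
    show "((\<lambda>s. w s i) \<longlongrightarrow> y i) (at 0)"
    proof (cases "i = n")
      case True
      have "((\<lambda>s. \<xi> s - y n) \<longlongrightarrow> 0) (at 0)"
      proof (rule Lim_null_comparison)
        show "\<forall>\<^sub>F s in at 0. norm (\<xi> s - y n) \<le> \<bar>s * v n\<bar>" using \<xi>(1) by auto
        have "((\<lambda>s. \<bar>s * v n\<bar>) \<longlongrightarrow> \<bar>0 * v n\<bar>) (at (0::real))"
          by (intro tendsto_intros)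
        then show "((\<lambda>s. \<bar>s * v n\<bar>) \<longlongrightarrow> 0) (at (0::real))" by simp
      qed
      then have "((\<lambda>s. \<xi> s) \<longlongrightarrow> y n) (at 0)" by (simp add: LIM_zero_iff)
      then show ?thesis using True by (simp add: w_def)
    next
      case False
      have "((\<lambda>s. y i + (if i < n then s * v i else 0)) \<longlongrightarrow> y i) (at (0::real))"
        by (cases "i < n") (auto intro!: tendsto_eq_intros)
      then show ?thesis using False by (simp add: w_def zp_def)
    qed
  qed
  have cl: "((\<lambda>s. pd n h (w s)) \<longlongrightarrow> pd n h y) (at 0)"
    using cont wl by (intro isCont_tendsto_compose[where g="pd n h"]) (auto simp: continuous_on_eq_continuous_at)
  have "((\<lambda>s. v n * pd n h (w s)) \<longlongrightarrow> v n * pd n h y) (at 0)"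
    by (intro tendsto_intros cl)
  moreover have "\<forall>\<^sub>F s in at 0. v n * pd n h (w s) =
      ((h (zp y v (Suc n) s) - h (zp y v n s)) - (h (zp y v (Suc n) 0) - h (zp y v n 0))) / (s - 0)"
    unfolding eventually_at_filter
    by (intro always_eventually allI impI) (simp add: \<xi>(2) w_def z0)
  ultimately show ?thesis
    unfolding has_field_derivative_iff by (rule Lim_transform_eventually)
qed

lemma chain_line:
  assumes diff: "\<And>x j. j < N \<Longrightarrow> (\<lambda>t. h (x(j := t))) differentiable (at (x j))"
  assumes cont: "\<And>j. j < N \<Longrightarrow> continuous_on UNIV (pd j h)"
  shows "((\<lambda>s. h (zp y v N s)) has_real_derivative (\<Sum>j<N. v j * pd j h y)) (at 0)"
proof -
  have "n \<le> N \<Longrightarrow> ((\<lambda>s. h (zp y v n s)) has_real_derivative (\<Sum>j<n. v j * pd j h y)) (at 0)" for n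
  proof (induction n)
    case 0
    have "zp y v 0 s = y" for s by (simp add: zp_def)
    then show ?case by simp
  next
    case (Suc n)
    have "((\<lambda>s. (h (zp y v (Suc n) s) - h (zp y v n s)) + h (zp y v n s)) has_real_derivative
       v n * pd n h y + (\<Sum>j<n. v j * pd j h y)) (at 0)"
      using Suc by (intro DERIV_add step_coord diff cont) auto
    then show ?case by (simp add: add.commute)
  qed
  then show ?thesis by simp
qed


definition linmap :: "(nat \<Rightarrow> nat \<Rightarrow> real) \<Rightarrow> nat \<Rightarrow> nat \<Rightarrow> (nat \<Rightarrow> real) \<Rightarrow> nat \<Rightarrow> real" where
  "linmap a N M x = (\<lambda>j. if j < N then (\<Sum>k<M. a j k * x k) else 0)"

lemma linmap_upd:
  assumes "i < M"
  shows "linmap a N M (x(i := t)) = zp (linmap a N M x) (\<lambda>j. a j i) N (t - x i)"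
proof -
  have "(\<Sum>k<M. a j k * (x(i := t)) k) = (\<Sum>k<M. a j k * x k) + (t - x i) * a j i" for j
  proof -
    have "(\<Sum>k<M. a j k * (x(i := t)) k) = (\<Sum>k<M. a j k * x k + (if k = i then a j i * (t - x i) else 0))"
      by (intro sum.cong) (auto simp: algebra_simps)
    also have "\<dots> = (\<Sum>k<M. a j k * x k) + a j i * (t - x i)"
      using assms by (simp add: sum.distrib)
    finally show ?thesis by (simp add: algebra_simps)
  qed
  then show ?thesis by (auto simp: linmap_def zp_def fun_eq_iff)
qed

lemma deriv_lin_term:
  assumes diff: "\<And>x j. j < N \<Longrightarrow> (\<lambda>t. h (x(j := t))) differentiable (at (x j))"
  assumes cont: "\<And>j. j < N \<Longrightarrow> continuous_on UNIV (pd j h)"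
  assumes "i < M"
  shows "((\<lambda>t. h (linmap a N M (x(i := t)))) has_real_derivative
           (\<Sum>j<N. a j i * pd j h (linmap a N M x))) (at (x i))"
proof -
  let ?F = "\<lambda>s. h (zp (linmap a N M x) (\<lambda>j. a j i) N s)"
  have F: "(?F has_real_derivative (\<Sum>j<N. a j i * pd j h (linmap a N M x))) (at 0)"
    by (rule chain_line[OF diff cont])
  have eq: "(\<lambda>t. h (linmap a N M (x(i := t)))) = (\<lambda>t. ?F (t - x i))"
    using assms(3) by (simp add: linmap_upd)
  have "((\<lambda>s. ?F ((s + x i) - x i)) has_real_derivative (\<Sum>j<N. a j i * pd j h (linmap a N M x))) (at 0)"
    using F by simp
  then have "((\<lambda>t. ?F (t - x i)) has_real_derivative (\<Sum>j<N. a j i * pd j h (linmap a N M x))) (at (0 + x i))"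
    by (subst DERIV_shift) simp
  then show ?thesis by (simp add: eq)
qed

lemma DERIV_sum_list:
  assumes "\<And>p. p \<in> set L \<Longrightarrow> ((\<lambda>t. F p t) has_real_derivative D p) (at x)"
  shows "((\<lambda>t. \<Sum>p\<leftarrow>L. F p t) has_real_derivative (\<Sum>p\<leftarrow>L. D p)) (at x)"
  using assms by (induction L) (auto intro!: DERIV_add)

lemma continuous_sum_list:
  assumes "\<And>p. p \<in> set L \<Longrightarrow> continuous_on S (\<lambda>x. F p x)"
  shows "continuous_on S (\<lambda>x. \<Sum>p\<leftarrow>L. (F p x :: real))"
  using assms by (induction L) (auto intro!: continuous_on_add)

lemma linmap_cont: "continuous_on UNIV (linmap a N M)"
  unfolding linmap_def
proof (intro continuous_on_coordinatewise_then_product)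
  fix i show "continuous_on UNIV (\<lambda>x. if i < N then \<Sum>k<M. a i k * x k else 0)"
    by (cases "i < N") (auto intro!: continuous_intros)
qed

definition pb :: "('x \<Rightarrow> real) \<Rightarrow> ('x \<Rightarrow> real) \<Rightarrow> bool" where
  "pb w \<phi> \<longleftrightarrow> (\<exists>C m. \<forall>x. \<bar>\<phi> x\<bar> \<le> C * w x ^ m)"

lemma pb_add:
  assumes w: "\<And>x. w x \<ge> 1" and "pb w \<phi>" "pb w \<psi>"
  shows "pb w (\<lambda>x. \<phi> x + \<psi> x)"
proof -
  obtain C1 m1 where 1: "\<And>x. \<bar>\<phi> x\<bar> \<le> C1 * w x ^ m1" using assms(2) by (auto simp: pb_def)
  obtain C2 m2 where 2: "\<And>x. \<bar>\<psi> x\<bar> \<le> C2 * w x ^ m2" using assms(3) by (auto simp: pb_def)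
  have "\<bar>\<phi> x + \<psi> x\<bar> \<le> (\<bar>C1\<bar> + \<bar>C2\<bar>) * w x ^ (m1 + m2)" for x
  proof -
    have p1: "w x ^ m1 \<le> w x ^ (m1 + m2)" "w x ^ m2 \<le> w x ^ (m1 + m2)"
      using w[of x] by (auto intro!: power_increasing)
    have "C1 * w x ^ m1 \<le> \<bar>C1\<bar> * w x ^ (m1 + m2)"
      using p1 w[of x] by (meson abs_ge_self dual_order.trans mult_mono abs_ge_zero zero_le_power order.trans zero_le_one)
    moreover have "C2 * w x ^ m2 \<le> \<bar>C2\<bar> * w x ^ (m1 + m2)"
      using p1 w[of x] by (meson abs_ge_self dual_order.trans mult_mono abs_ge_zero zero_le_power order.trans zero_le_one)
    ultimately show ?thesis using 1[of x] 2[of x] by (simp add: algebra_simps)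
  qed
  then show ?thesis by (auto simp: pb_def)
qed

lemma pb_scale:
  assumes "pb w \<phi>"
  shows "pb w (\<lambda>x. c * \<phi> x)"
proof -
  obtain C m where 1: "\<And>x. \<bar>\<phi> x\<bar> \<le> C * w x ^ m" using assms by (auto simp: pb_def)
  have "\<bar>c * \<phi> x\<bar> \<le> (\<bar>c\<bar> * C) * w x ^ m" for x
    using mult_left_mono[OF 1[of x], of "\<bar>c\<bar>"] by (simp add: abs_mult algebra_simps)
  then show ?thesis by (auto simp: pb_def)
qed

lemma pb_sum_list:
  fixes w :: "'x \<Rightarrow> real" and F :: "'p \<Rightarrow> 'x \<Rightarrow> real"
  assumes w: "\<And>x. w x \<ge> 1" and "\<And>p. p \<in> set L \<Longrightarrow> pb w (F p)"
  shows "pb w (\<lambda>x. \<Sum>p\<leftarrow>L. F p x)"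
  using assms(2)
proof (induction L)
  case Nil then show ?case by (auto simp: pb_def intro!: exI[of _ 0])
next
  case (Cons p L)
  then show ?case using pb_add[OF w, where \<phi>="F p" and \<psi>="\<lambda>x. \<Sum>p\<leftarrow>L. F p x"] by simp
qed


lemma normN_ge0: "normN N x \<ge> 0"
  by (simp add: normN_def sum_nonneg)

lemma coord_le_normN: "k < M \<Longrightarrow> \<bar>x k\<bar> \<le> normN M x"
proof -
  assume "k < M"
  then have "(x k)\<^sup>2 \<le> (\<Sum>i<M. (x i)\<^sup>2)"
    by (intro member_le_sum) auto
  then have "sqrt ((x k)\<^sup>2) \<le> sqrt (\<Sum>i<M. (x i)\<^sup>2)" by (rule real_sqrt_le_mono)
  then show ?thesis by (simp add: normN_def)
qed

lemma normN_le_sum_abs: "normN N x \<le> (\<Sum>j<N. \<bar>x j\<bar>)"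
  using L2_set_le_sum_abs[of x "{..<N}"] by (simp add: normN_def L2_set_def)

lemma lin_bound: "\<exists>K\<ge>1. \<forall>x. 1 + normN N (linmap a N M x) \<le> K * (1 + normN M x)"
proof -
  define A where "A = (\<Sum>j<N. \<Sum>k<M. \<bar>a j k\<bar>)"
  have A0: "A \<ge> 0" by (simp add: A_def sum_nonneg)
  have "1 + normN N (linmap a N M x) \<le> (1 + A) * (1 + normN M x)" for x
  proof -
    have "\<bar>linmap a N M x j\<bar> \<le> (\<Sum>k<M. \<bar>a j k\<bar>) * normN M x" if "j < N" for j
    proof -
      have "\<bar>\<Sum>k<M. a j k * x k\<bar> \<le> (\<Sum>k<M. \<bar>a j k * x k\<bar>)" by (rule sum_abs)
      also have "\<dots> \<le> (\<Sum>k<M. \<bar>a j k\<bar> * normN M x)"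
        by (intro sum_mono) (auto simp: abs_mult intro!: mult_left_mono coord_le_normN)
      finally show ?thesis using that by (simp add: linmap_def sum_distrib_right)
    qed
    then have "(\<Sum>j<N. \<bar>linmap a N M x j\<bar>) \<le> (\<Sum>j<N. (\<Sum>k<M. \<bar>a j k\<bar>) * normN M x)"
      by (intro sum_mono) auto
    then have "normN N (linmap a N M x) \<le> A * normN M x"
      using normN_le_sum_abs[of N "linmap a N M x"] by (simp add: A_def sum_distrib_right)
    moreover have "A * normN M x \<le> A + normN M x + A * normN M x" using A0 normN_ge0[of M x] by simp
    ultimately show ?thesis by (simp add: algebra_simps)
  qed
  then show ?thesis using A0 by (intro exI[of _ "1 + A"]) auto
qed

lemma pb_lin:
  assumes "\<And>y. \<bar>\<phi> y\<bar> \<le> C * (1 + normN N y) ^ m"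
  shows "pb (\<lambda>x. 1 + normN M x) (\<lambda>x. \<phi> (linmap a N M x))"
proof -
  obtain K where K: "K \<ge> 1" "\<And>x. 1 + normN N (linmap a N M x) \<le> K * (1 + normN M x)"
    using lin_bound by blast
  have C0: "C \<ge> 0"
  proof -
    have "0 \<le> C * (1 + normN N (\<lambda>_. 0)) ^ m" using assms[of "\<lambda>_. 0"] by linarith
    moreover have "(1 + normN N (\<lambda>_. 0)) ^ m > 0" using normN_ge0[of N "\<lambda>_. 0"] by simp
    ultimately show ?thesis by (simp add: zero_le_mult_iff)
  qed
  have "\<bar>\<phi> (linmap a N M x)\<bar> \<le> (C * K ^ m) * (1 + normN M x) ^ m" for x
  proof -
    have "(1 + normN N (linmap a N M x)) ^ m \<le> (K * (1 + normN M x)) ^ m"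
      using K(2)[of x] normN_ge0[of N "linmap a N M x"] by (intro power_mono) auto
    then have "C * (1 + normN N (linmap a N M x)) ^ m \<le> C * (K * (1 + normN M x)) ^ m"
      using C0 by (rule mult_left_mono)
    then show ?thesis using assms[of "linmap a N M x"] by (simp only: power_mult_distrib mult.assoc)
  qed
  then show ?thesis unfolding pb_def by blast
qed


lemma sum_concat_aux:
  fixes G :: "nat list \<Rightarrow> real"
  shows "(\<Sum>q\<leftarrow>concat (map (\<lambda>p. map (\<lambda>j. (fst p * a j, j # snd p)) [0..<N]) L). fst q * G (snd q)) =
   (\<Sum>p\<leftarrow>L. fst p * (\<Sum>j<N. a j * G (j # snd p)))"
proof (induction L)
  case Nil then show ?case by simp
next
  case (Cons p L)
  have "(\<Sum>q\<leftarrow>map (\<lambda>j. (fst p * a j, j # snd p)) [0..<N]. fst q * G (snd q)) =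
        (\<Sum>j<N. fst p * a j * G (j # snd p))"
    by (simp add: interv_sum_list_conv_sum_set_nat comp_def atLeast0LessThan)
  also have "\<dots> = fst p * (\<Sum>j<N. a j * G (j # snd p))"
    unfolding sum_distrib_left by (simp add: mult.assoc)
  finally have "(\<Sum>q\<leftarrow>map (\<lambda>j. (fst p * a j, j # snd p)) [0..<N]. fst q * G (snd q)) =
        fst p * (\<Sum>j<N. a j * G (j # snd p))" .
  then show ?case using Cons by simp
qed

lemma Cinf_p_lin:
  assumes f: "Cinf_p N f"
  shows "Cinf_p M (\<lambda>x. f (linmap a N M x))"
proof -
  define g where "g = (\<lambda>x. f (linmap a N M x))"
  have fdiff: "\<And>js x j. set js \<subseteq> {..<N} \<Longrightarrow> j < N \<Longrightarrow> (\<lambda>t. iter_pd js f (x(j := t))) differentiable (at (x j))"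
    using f unfolding Cinf_p_def by blast
  have fcont: "\<And>js. set js \<subseteq> {..<N} \<Longrightarrow> continuous_on UNIV (iter_pd js f)"
    using f unfolding Cinf_p_def by blast
  have fbd: "\<And>js. set js \<subseteq> {..<N} \<Longrightarrow> \<exists>C m. \<forall>x. \<bar>iter_pd js f x\<bar> \<le> C * (1 + normN N x) ^ m"
    using f unfolding Cinf_p_def by blast
  have tderiv: "((\<lambda>t. iter_pd js f (linmap a N M (x(i := t)))) has_real_derivative
      (\<Sum>j<N. a j i * iter_pd (j # js) f (linmap a N M x))) (at (x i))"
    if "set js \<subseteq> {..<N}" "i < M" for js x i
  proof -
    have "((\<lambda>t. iter_pd js f (linmap a N M (x(i := t)))) has_real_derivative
      (\<Sum>j<N. a j i * pd j (iter_pd js f) (linmap a N M x))) (at (x i))"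
    proof (rule deriv_lin_term)
      fix x j assume j: "j < N"
      show "(\<lambda>t. iter_pd js f (x(j := t))) differentiable (at (x j))" using fdiff that j by blast
    next
      fix j assume j: "j < N"
      show "continuous_on UNIV (pd j (iter_pd js f))"
        unfolding iter_pd_Cons[symmetric] by (rule fcont) (use that j in auto)
    qed (rule that(2))
    then show ?thesis by (simp only: iter_pd_Cons)
  qed
  have sderiv: "((\<lambda>t. \<Sum>p\<leftarrow>L. fst p * iter_pd (snd p) f (linmap a N M (x(i := t)))) has_real_derivative
      (\<Sum>p\<leftarrow>L. fst p * (\<Sum>j<N. a j i * iter_pd (j # snd p) f (linmap a N M x)))) (at (x i))"
    if "\<forall>p\<in>set L. set (snd p) \<subseteq> {..<N}" "i < M" for L x i
    using that by (intro DERIV_sum_list DERIV_cmult tderiv) auto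
  have rep: "\<exists>L. (\<forall>p\<in>set L. set (snd p) \<subseteq> {..<N}) \<and>
      iter_pd is g = (\<lambda>x. \<Sum>p\<leftarrow>L. fst p * iter_pd (snd p) f (linmap a N M x))"
    if "set is \<subseteq> {..<M}" for "is"
    using that
  proof (induction "is")
    case Nil
    show ?case by (intro exI[of _ "[(1, [])]"]) (simp add: g_def)
  next
    case (Cons i "is")
    then obtain L where L: "\<forall>p\<in>set L. set (snd p) \<subseteq> {..<N}"
      "iter_pd is g = (\<lambda>x. \<Sum>p\<leftarrow>L. fst p * iter_pd (snd p) f (linmap a N M x))" by auto
    have iM: "i < M" using Cons by auto
    define L' where "L' = concat (map (\<lambda>p. map (\<lambda>j. (fst p * a j i, j # snd p)) [0..<N]) L)"
    have "\<forall>p\<in>set L'. set (snd p) \<subseteq> {..<N}" using L(1) by (auto simp: L'_def)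
    moreover have "iter_pd (i # is) g = (\<lambda>x. \<Sum>p\<leftarrow>L'. fst p * iter_pd (snd p) f (linmap a N M x))"
    proof
      fix x
      have "iter_pd (i # is) g x = deriv (\<lambda>t. \<Sum>p\<leftarrow>L. fst p * iter_pd (snd p) f (linmap a N M (x(i := t)))) (x i)"
        by (simp add: L(2))
      also have "\<dots> = (\<Sum>p\<leftarrow>L. fst p * (\<Sum>j<N. a j i * iter_pd (j # snd p) f (linmap a N M x)))"
        by (rule DERIV_imp_deriv[OF sderiv[OF L(1) iM]])
      also have "\<dots> = (\<Sum>p\<leftarrow>L'. fst p * iter_pd (snd p) f (linmap a N M x))"
        unfolding L'_def by (rule sum_concat_aux[symmetric])
      finally show "iter_pd (i # is) g x = (\<Sum>p\<leftarrow>L'. fst p * iter_pd (snd p) f (linmap a N M x))" .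
    qed
    ultimately show ?case by blast
  qed
  have trunc: "g x = g (\<lambda>i. if i < M then x i else 0)" for x
  proof -
    have "linmap a N M x = linmap a N M (\<lambda>i. if i < M then x i else 0)"
      by (auto simp: linmap_def fun_eq_iff intro!: sum.cong)
    then show ?thesis by (simp add: g_def)
  qed
  have main: "(\<forall>x. \<forall>i<M. (\<lambda>t. iter_pd is g (x(i := t))) differentiable (at (x i))) \<and>
        continuous_on UNIV (iter_pd is g) \<and>
        (\<exists>C m. \<forall>x. \<bar>iter_pd is g x\<bar> \<le> C * (1 + normN M x) ^ m)"
    if isM: "set is \<subseteq> {..<M}" for "is"
  proof -
    obtain L where L: "\<forall>p\<in>set L. set (snd p) \<subseteq> {..<N}"
      "iter_pd is g = (\<lambda>x. \<Sum>p\<leftarrow>L. fst p * iter_pd (snd p) f (linmap a N M x))"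
      using rep[OF isM] by blast
    have "(\<lambda>t. iter_pd is g (x(i := t))) differentiable (at (x i))" if "i < M" for x i
      using sderiv[OF L(1) that, of x] unfolding L(2) real_differentiable_def by blast
    moreover have "continuous_on UNIV (iter_pd is g)"
      unfolding L(2)
    proof (intro continuous_sum_list continuous_on_mult continuous_on_const)
      fix p assume "p \<in> set L"
      then show "continuous_on UNIV (\<lambda>x. iter_pd (snd p) f (linmap a N M x))"
        using L(1) by (intro continuous_on_compose2[OF fcont linmap_cont]) auto
    qed
    moreover have "pb (\<lambda>x. 1 + normN M x) (iter_pd is g)"
      unfolding L(2)
    proof (intro pb_sum_list pb_scale)
      show "1 \<le> 1 + normN M x" for x using normN_ge0[of M x] by simp
      fix p assume "p \<in> set L"
      then obtain C m where "\<forall>x. \<bar>iter_pd (snd p) f x\<bar> \<le> C * (1 + normN N x) ^ m"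
        using fbd L(1) by blast
      then show "pb (\<lambda>x. 1 + normN M x) (\<lambda>x. iter_pd (snd p) f (linmap a N M x))"
        by (intro pb_lin) auto
    qed
    ultimately show ?thesis unfolding pb_def by blast
  qed
  show ?thesis
    unfolding Cinf_p_def using trunc main by (simp add: g_def)
qed


definition RS :: "(real \<Rightarrow> real) \<Rightarrow> (real \<Rightarrow> real) \<Rightarrow> nat \<Rightarrow> real" where
  "RS g c N = (\<Sum>l<(2::nat)^N. g (real l / 2^N) * (c (real (l+1) / 2^N) - c (real l / 2^N)))"

lemma sum_even_odd: fixes F :: "nat \<Rightarrow> 'a::comm_monoid_add" shows "(\<Sum>l<2*n. F l) = (\<Sum>a<n. F (2*a) + F (2*a+1))"
  by (induction n) (simp_all add: sum.distrib algebra_simps)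

lemma RS_refine:
  assumes "\<And>a. a < 2^N \<Longrightarrow> g (real (2*a+1) / 2^(Suc N)) = g (real a / 2^N)"
  shows "RS g c (Suc N) = RS g c N"
proof -
  have e1: "real (2*a) / 2^(Suc N) = real a / 2^N" for a :: nat by (simp add: field_simps)
  have e2: "real (2*a+1+1) / 2^(Suc N) = real (a+1) / 2^N" for a :: nat by (simp add: field_simps)
  have "RS g c (Suc N) = (\<Sum>a<2^N. g (real (2*a) / 2^(Suc N)) * (c (real (2*a+1) / 2^(Suc N)) - c (real (2*a) / 2^(Suc N)))
        + g (real (2*a+1) / 2^(Suc N)) * (c (real (2*a+1+1) / 2^(Suc N)) - c (real (2*a+1) / 2^(Suc N))))"
    unfolding RS_def power_Suc by (rule sum_even_odd)
  also have "\<dots> = RS g c N"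
    unfolding RS_def e1 e2
  proof (intro sum.cong refl)
    fix a assume "a \<in> {..<(2::nat)^N}"
    then have h: "g (real (2*a+1) / 2^(Suc N)) = g (real a / 2^N)" using assms by simp
    show "g (real a / 2^N) * (c (real (2*a+1) / 2^(Suc N)) - c (real a / 2^N)) +
        g (real (2*a+1) / 2^(Suc N)) * (c (real (a+1) / 2^N) - c (real (2*a+1) / 2^(Suc N))) =
        g (real a / 2^N) * (c (real (a+1) / 2^N) - c (real a / 2^N))"
      unfolding h by (simp only: right_diff_distrib)
  qed
  finally show ?thesis .
qed

lemma stieltjes_RS:
  assumes "\<And>N a. N \<ge> M \<Longrightarrow> a < 2^N \<Longrightarrow> g (real (2*a+1) / 2^(Suc N)) = g (real a / 2^N)"
  shows "stieltjes01 g c = RS g c M"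
proof -
  have "N \<ge> M \<Longrightarrow> RS g c N = RS g c M" for N
  proof (induction N rule: dec_induct)
    case base then show ?case by simp
  next
    case (step N)
    have "RS g c (Suc N) = RS g c N"
      using step(1) by (intro RS_refine assms) auto
    then show ?case using step by simp
  qed
  then have "eventually (\<lambda>N. RS g c N = RS g c M) sequentially"
    unfolding eventually_sequentially by blast
  then have "RS g c \<longlonglongrightarrow> RS g c M" by (rule tendsto_eventually)
  then have "lim (RS g c) = RS g c M" by (rule limI)
  moreover have "stieltjes01 g c = lim (RS g c)"
    unfolding stieltjes01_def RS_def[abs_def] by (rule refl)
  ultimately show ?thesis by simp
qed

lemma haar_one: "haar 1 u = 1" "haar (Suc 0) u = 1"
  by (simp_all add: haar_def)

lemma stieltjes_haar1: "stieltjes01 (haar 1) c = c 1 - c 0"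
proof -
  have "stieltjes01 (haar 1) c = RS (haar 1) c 0"
    by (rule stieltjes_RS) (simp add: haar_one)
  then show ?thesis by (simp add: RS_def haar_one)
qed


lemma thr_le:
  fixes p :: int and a :: nat
  shows "(real_of_int p / 2^N \<le> real a / 2^N) = (real_of_int p / 2^N \<le> real (2*a+1) / 2^(Suc N))"
proof -
  have "(real_of_int p / 2^N \<le> real a / 2^N) = (real_of_int p \<le> real a)"
    by (simp add: divide_le_cancel)
  also have "\<dots> = (p \<le> int a)" by linarith
  also have "\<dots> = (2 * p \<le> 2 * int a + 1)" by linarith
  also have "\<dots> = (2 * real_of_int p \<le> 2 * real a + 1)"
    by (metis (mono_tags, opaque_lifting) of_int_le_iff of_int_add of_int_mult of_int_of_nat_eq of_int_numeral of_int_1)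
  also have "\<dots> = (real_of_int p \<le> real (2*a+1) / 2)" by (auto simp: field_simps)
  also have "\<dots> = (real_of_int p / 2^N \<le> (real (2*a+1) / 2) / 2^N)"
    by (subst divide_le_cancel) simp
  also have "(real (2*a+1) / 2) / 2^N = real (2*a+1) / (2::real)^(Suc N)" by simp
  finally show ?thesis .
qed

lemma thr_less:
  fixes p :: int and a :: nat
  shows "(real a / 2^N < real_of_int p / 2^N) = (real (2*a+1) / 2^(Suc N) < real_of_int p / 2^N)"
proof -
  have "(real a / 2^N < real_of_int p / 2^N) = (real a < real_of_int p)"
    by (simp add: divide_less_cancel)
  also have "\<dots> = (int a < p)" by linarith
  also have "\<dots> = (2 * int a + 1 < 2 * p)" by linarith
  also have "\<dots> = (2 * real a + 1 < 2 * real_of_int p)"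
    by (metis (mono_tags, opaque_lifting) of_int_less_iff of_int_add of_int_mult of_int_of_nat_eq of_int_numeral of_int_1)
  also have "\<dots> = (real (2*a+1) / 2 < real_of_int p)" by (auto simp: field_simps)
  also have "\<dots> = ((real (2*a+1) / 2) / 2^N < real_of_int p / 2^N)"
    by (subst divide_less_cancel) simp
  also have "(real (2*a+1) / 2) / 2^N = real (2*a+1) / (2::real)^(Suc N)" by simp
  finally show ?thesis .
qed

lemma thr_scale:
  assumes "M \<le> N"
  shows "real_of_int q / 2^M = real_of_int (q * 2^(N-M)) / (2::real)^N"
proof -
  have "(2::real)^N = 2^M * 2^(N-M)" using assms by (simp flip: power_add)
  then show ?thesis by simp
qed

lemma haar_mk_refine:
  assumes "Suc m \<le> N"
  shows "haar_mk m k (real (2*a+1) / 2^(Suc N)) = haar_mk m k (real a / 2^N)"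
proof -
  have le: "(real_of_int q / 2^(m+1) \<le> real a / 2^N) = (real_of_int q / 2^(m+1) \<le> real (2*a+1) / 2^(Suc N))" for q
    using thr_scale[of "m+1" N q] assms thr_le[where p="q * 2^(N - (m+1))" and N=N and a=a] by simp
  have less: "(real a / 2^N < real_of_int q / 2^(m+1)) = (real (2*a+1) / 2^(Suc N) < real_of_int q / 2^(m+1))" for q
    using thr_scale[of "m+1" N q] assms thr_less[where p="q * 2^(N - (m+1))" and N=N and a=a] by simp
  have e: "2 * real k - 2 = real_of_int (2 * int k - 2)" "2 * real k - 1 = real_of_int (2 * int k - 1)"
    "2 * real k = real_of_int (2 * int k)" by simp_all
  show ?thesis
    unfolding haar_mk_def e(1,2) unfolding e(3) le less ..
qed

lemma haar_mk_grid:
  "haar_mk m (Suc j) (real l / 2^(m+1)) =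
     (if l = 2*j then 2 powr (real m / 2) else if l = 2*j+1 then - (2 powr (real m / 2)) else 0)"
proof -
  have e: "2 * real (Suc j) - 2 = real (2*j)" "2 * real (Suc j) - 1 = real (2*j+1)"
    "2 * real (Suc j) = real (2*j+2)" by simp_all
  have c1: "(real x / 2^(m+1) \<le> real l / 2^(m+1)) = (x \<le> l)" for x :: nat
    by (simp add: divide_le_cancel)
  have c2: "(real l / 2^(m+1) < real x / 2^(m+1)) = (l < x)" for x :: nat
    by (simp add: divide_less_cancel)
  show ?thesis unfolding haar_mk_def e(1,2) unfolding e(3) c1 c2 by auto
qed

lemma sum_two_points:
  fixes D :: "nat \<Rightarrow> real"
  assumes "p + 1 < n"
  shows "(\<Sum>l<n. (if l = p then A else if l = p+1 then - A else 0) * D l) = A * D p - A * D (p+1)"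
proof -
  have "(\<Sum>l<n. (if l = p then A else if l = p+1 then - A else 0) * D l) =
        (\<Sum>l<n. (if l = p then A * D l else 0) + (if l = p+1 then - A * D l else 0))"
    by (intro sum.cong) auto
  also have "\<dots> = A * D p - A * D (p+1)"
    using assms by (simp add: sum.distrib)
  finally show ?thesis .
qed

lemma stieltjes_haar_mk:
  assumes "Suc j \<le> 2^m"
  shows "stieltjes01 (haar_mk m (Suc j)) c =
    2 powr (real m / 2) * ((c (real (2*j+1) / 2^(m+1)) - c (real (2*j) / 2^(m+1)))
                         - (c (real (2*j+2) / 2^(m+1)) - c (real (2*j+1) / 2^(m+1))))"
proof -
  have "stieltjes01 (haar_mk m (Suc j)) c = RS (haar_mk m (Suc j)) c (m+1)"
    by (rule stieltjes_RS) (rule haar_mk_refine, simp)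
  also have "\<dots> = (\<Sum>l<2^(m+1). (if l = 2*j then 2 powr (real m / 2) else if l = 2*j+1 then - (2 powr (real m / 2)) else 0)
       * (c (real (l+1) / 2^(m+1)) - c (real l / 2^(m+1))))"
    unfolding RS_def haar_mk_grid by simp
  also have "\<dots> = 2 powr (real m / 2) * (c (real (2*j+1) / 2^(m+1)) - c (real (2*j) / 2^(m+1)))
      - 2 powr (real m / 2) * (c (real (2*j+1+1) / 2^(m+1)) - c (real (2*j+1) / 2^(m+1)))"
  proof (rule sum_two_points)
    have "2 * j + 2 \<le> 2 * 2^m" using assms by simp
    then show "2 * j + 1 < 2 ^ (m + 1)" by simp
  qed
  finally show ?thesis by (simp add: algebra_simps)
qed

lemma haar_eq_mk:
  assumes "1 \<le> k" "k \<le> 2^m"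
  shows "haar (2^m + k) = haar_mk m k"
proof
  fix u
  have uniq: "m' = m \<and> k' = k" if "2^m' + k' = (2::nat)^m + k" "1 \<le> k'" "k' \<le> 2^m'" for m' k'
  proof -
    have "(2::nat)^m' < 2^(m+1)" using that assms by simp
    then have "m' < m + 1" by (rule power_less_imp_less_exp[rotated]) simp
    moreover have "(2::nat)^m < 2^(m'+1)" using that assms by simp
    then have "m < m' + 1" by (rule power_less_imp_less_exp[rotated]) simp
    ultimately have "m' = m" by simp
    then show ?thesis using that by simp
  qed
  have ne: "2^m + k \<noteq> (1::nat)" using assms by simp
  have "(\<Sum>m'<2^m+k. \<Sum>k'\<in>{1..2^m'}. if 2^m + k = 2^m' + k' then haar_mk m' k' u else 0) =
        (\<Sum>m'<2^m+k. if m' = m then haar_mk m k u else 0)"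
  proof (intro sum.cong refl)
    fix m' assume "m' \<in> {..<2^m+k}"
    show "(\<Sum>k'\<in>{1..2^m'}. if 2^m + k = 2^m' + k' then haar_mk m' k' u else 0) =
          (if m' = m then haar_mk m k u else 0)"
    proof (cases "m' = m")
      case True
      have "(\<Sum>k'\<in>{1..2^m'}. if 2^m + k = 2^m' + k' then haar_mk m' k' u else 0) =
            (\<Sum>k'\<in>{1..2^m}. if k' = k then haar_mk m k u else 0)"
        using True by (intro sum.cong) auto
      also have "\<dots> = haar_mk m k u" using assms by simp
      finally show ?thesis using True by simp
    next
      case False
      then show ?thesis using uniq by (auto intro!: sum.neutral)
    qed
  qed
  also have "\<dots> = haar_mk m k u"
  proof -
    have "m < 2^m" by (rule less_exp)
    then have "m < 2^m + k" by linarith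
    then show ?thesis by simp
  qed
  finally show "haar (2^m + k) u = haar_mk m k u"
    using ne by (simp add: haar_def)
qed


lemma pairing_gen: "pairing d (Suc i) \<gamma> = stieltjes01 (haar (i div d + 1)) (\<lambda>t. \<gamma> t (i mod d))"
  by (simp add: pairing_def)

lemma pairing_first:
  assumes "c < d"
  shows "pairing d (Suc c) \<gamma> = \<gamma> 1 c - \<gamma> 0 c"
  using assms stieltjes_haar1[of "\<lambda>t. \<gamma> t c"] by (simp add: pairing_gen)

lemma pairing_mk:
  assumes "i div d = 2^m + j" "Suc j \<le> 2^m"
  shows "pairing d (Suc i) \<gamma> =
    2 powr (real m / 2) * ((\<gamma> (real (2*j+1) / 2^(m+1)) (i mod d) - \<gamma> (real (2*j) / 2^(m+1)) (i mod d))
                         - (\<gamma> (real (2*j+2) / 2^(m+1)) (i mod d) - \<gamma> (real (2*j+1) / 2^(m+1)) (i mod d)))"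
proof -
  have "haar (i div d + 1) = haar_mk m (Suc j)"
    using haar_eq_mk[of "Suc j" m] assms by simp
  then show ?thesis using assms by (simp add: pairing_gen stieltjes_haar_mk)
qed

lemma dyadic_decomp:
  assumes "(2::nat) \<le> r"
  shows "\<exists>m j. r = 2^m + Suc j \<and> Suc j \<le> 2^m"
  using assms
proof (induction r rule: dec_induct)
  case base
  show ?case by (intro exI[of _ 0]) auto
next
  case (step r)
  then obtain m j where mj: "r = 2^m + Suc j" "Suc j \<le> 2^m" by blast
  show ?case
  proof (cases "Suc j < 2^m")
    case True
    then show ?thesis using mj by (intro exI[of _ m] exI[of _ "Suc j"]) auto
  next
    case False
    then have "Suc j = 2^m" using mj by simp
    then show ?thesis using mj by (intro exI[of _ "Suc m"] exI[of _ 0]) auto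
  qed
qed


definition LC1 :: "nat \<Rightarrow> nat \<Rightarrow> ((real \<Rightarrow> nat \<Rightarrow> real) \<Rightarrow> real) \<Rightarrow> bool" where
  "LC1 d K \<phi> \<longleftrightarrow> (\<exists>b. \<forall>\<gamma>\<in>C0 d. \<phi> \<gamma> = (\<Sum>i<K. b i * pairing d (Suc i) \<gamma>))"

lemma LC1_cong: "LC1 d K \<psi> \<Longrightarrow> (\<And>\<gamma>. \<gamma> \<in> C0 d \<Longrightarrow> \<phi> \<gamma> = \<psi> \<gamma>) \<Longrightarrow> LC1 d K \<phi>"
  unfolding LC1_def by metis

lemma LC1_mono:
  assumes "LC1 d K \<phi>" "K \<le> K'"
  shows "LC1 d K' \<phi>"
proof -
  obtain b where b: "\<And>\<gamma>. \<gamma> \<in> C0 d \<Longrightarrow> \<phi> \<gamma> = (\<Sum>i<K. b i * pairing d (Suc i) \<gamma>)"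
    using assms(1) by (auto simp: LC1_def)
  have "(\<Sum>i<K'. (if i < K then b i else 0) * pairing d (Suc i) \<gamma>) = (\<Sum>i<K. b i * pairing d (Suc i) \<gamma>)" for \<gamma>
    using assms(2) by (intro sum.mono_neutral_cong_right) auto
  note eq = this
  show ?thesis unfolding LC1_def
  proof (intro exI[of _ "\<lambda>i. if i < K then b i else 0"] ballI)
    fix \<gamma> assume "\<gamma> \<in> C0 d"
    then show "\<phi> \<gamma> = (\<Sum>i<K'. (if i < K then b i else 0) * pairing d (Suc i) \<gamma>)"
      by (simp only: b eq)
  qed
qed

lemma LC1_add:
  assumes "LC1 d K \<phi>" "LC1 d K \<psi>"
  shows "LC1 d K (\<lambda>\<gamma>. \<phi> \<gamma> + \<psi> \<gamma>)"
proof -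
  obtain b where b: "\<And>\<gamma>. \<gamma> \<in> C0 d \<Longrightarrow> \<phi> \<gamma> = (\<Sum>i<K. b i * pairing d (Suc i) \<gamma>)"
    using assms(1) by (auto simp: LC1_def)
  obtain b' where b': "\<And>\<gamma>. \<gamma> \<in> C0 d \<Longrightarrow> \<psi> \<gamma> = (\<Sum>i<K. b' i * pairing d (Suc i) \<gamma>)"
    using assms(2) by (auto simp: LC1_def)
  show ?thesis unfolding LC1_def
    by (intro exI[of _ "\<lambda>i. b i + b' i"]) (simp add: b b' sum.distrib algebra_simps)
qed

lemma LC1_scale:
  assumes "LC1 d K \<phi>"
  shows "LC1 d K (\<lambda>\<gamma>. a * \<phi> \<gamma>)"
proof -
  obtain b where b: "\<And>\<gamma>. \<gamma> \<in> C0 d \<Longrightarrow> \<phi> \<gamma> = (\<Sum>i<K. b i * pairing d (Suc i) \<gamma>)"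
    using assms(1) by (auto simp: LC1_def)
  show ?thesis unfolding LC1_def
    by (intro exI[of _ "\<lambda>i. a * b i"]) (simp add: b sum_distrib_left algebra_simps)
qed

lemma LC1_pair:
  assumes "i < K"
  shows "LC1 d K (pairing d (Suc i))"
proof -
  have "(\<Sum>i'<K. (if i' = i then 1 else 0) * pairing d (Suc i') \<gamma>) = pairing d (Suc i) \<gamma>" for \<gamma>
  proof -
    have "(\<Sum>i'<K. (if i' = i then 1 else 0) * pairing d (Suc i') \<gamma>) =
          (\<Sum>i'<K. if i' = i then pairing d (Suc i') \<gamma> else 0)"
      by (intro sum.cong) auto
    then show ?thesis using assms by simp
  qed
  then show ?thesis unfolding LC1_def by metis
qed

lemma LC1_zero: "LC1 d K (\<lambda>\<gamma>. 0)"
  unfolding LC1_def by (intro exI[of _ "\<lambda>_. 0"]) simp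

lemma C0_zero: "\<gamma> \<in> C0 d \<Longrightarrow> c < d \<Longrightarrow> \<gamma> 0 c = 0"
  by (simp add: C0_def)

lemma LC1_points:
  assumes "c < d"
  shows "l \<le> 2^n \<Longrightarrow> LC1 d (d * 2^n) (\<lambda>\<gamma>. \<gamma> (real l / 2^n) c)"
proof (induction n arbitrary: l)
  case 0
  then have "l = 0 \<or> l = 1" by auto
  then show ?case
  proof
    assume "l = 0"
    show ?thesis
    proof (rule LC1_cong[OF LC1_zero])
      fix \<gamma> :: "real \<Rightarrow> nat \<Rightarrow> real" assume "\<gamma> \<in> C0 d"
      then show "\<gamma> (real l / 2^0) c = 0" using \<open>l = 0\<close> C0_zero[OF _ assms] by simp
    qed
  next
    assume "l = 1"
    have "LC1 d (d * 2^0) (pairing d (Suc c))" using assms by (intro LC1_pair) simp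
    show ?thesis
    proof (rule LC1_cong[OF \<open>LC1 d (d * 2^0) (pairing d (Suc c))\<close>])
      fix \<gamma> :: "real \<Rightarrow> nat \<Rightarrow> real" assume "\<gamma> \<in> C0 d"
      then show "\<gamma> (real l / 2^0) c = pairing d (Suc c) \<gamma>"
        using \<open>l = 1\<close> C0_zero[OF _ assms] pairing_first[OF assms] by simp
    qed
  qed
next
  case (Suc n)
  have mono: "d * 2^n \<le> d * 2^(Suc n)" by simp
  show ?case
  proof (cases "even l")
    case True
    then obtain l' where l': "l = 2 * l'" by blast
    then have "l' \<le> 2^n" using Suc.prems by simp
    have "LC1 d (d * 2^(Suc n)) (\<lambda>\<gamma>. \<gamma> (real l' / 2^n) c)"
      by (rule LC1_mono[OF Suc.IH[OF \<open>l' \<le> 2^n\<close>] mono])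
    moreover have "real l / 2^(Suc n) = real l' / 2^n" using l' by simp
    ultimately show ?thesis by simp
  next
    case False
    then obtain j where j: "l = 2 * j + 1" using oddE by blast
    then have jn: "Suc j \<le> 2^n" using Suc.prems by simp
    define i where "i = d * (2^n + j) + c"
    have idiv: "i div d = 2^n + j" "i mod d = c" using assms by (simp_all add: i_def)
    have iK: "i < d * 2^(Suc n)"
    proof -
      have "i < d * (2^n + j) + d" using assms by (simp add: i_def)
      also have "\<dots> = d * (2^n + Suc j)" by simp
      also have "\<dots> \<le> d * 2^(Suc n)"
      proof (rule mult_le_mono2)
        show "2^n + Suc j \<le> 2^(Suc n)" using jn by simp
      qed
      finally show ?thesis .
    qed
    define A where "A = (2::real) powr (real n / 2)"
    have A0: "A > 0" by (simp add: A_def)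
    have P: "pairing d (Suc i) \<gamma> = A * ((\<gamma> (real (2*j+1) / 2^(n+1)) c - \<gamma> (real (2*j) / 2^(n+1)) c)
                         - (\<gamma> (real (2*j+2) / 2^(n+1)) c - \<gamma> (real (2*j+1) / 2^(n+1)) c))" for \<gamma>
      using pairing_mk[OF idiv(1) jn, of \<gamma>] by (simp add: idiv(2) A_def)
    have e1: "real (2*j) / 2^(n+1) = real j / (2::real)^n" by simp
    have e2: "real (2*j+2) / 2^(n+1) = real (Suc j) / (2::real)^n" by (simp add: field_simps)
    have e3: "real l / 2^(Suc n) = real (2*j+1) / (2::real)^(n+1)" using j by simp
    have key: "\<gamma> (real l / 2^(Suc n)) c =
       (1 / (2 * A)) * pairing d (Suc i) \<gamma> + (1/2) * \<gamma> (real j / 2^n) c + (1/2) * \<gamma> (real (Suc j) / 2^n) c" for \<gamma>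
    proof -
      define x where "x = \<gamma> (real (2*j+1) / 2^(n+1)) c"
      define y where "y = \<gamma> (real j / 2^n) c"
      define z where "z = \<gamma> (real (Suc j) / 2^n) c"
      have "pairing d (Suc i) \<gamma> = A * ((x - y) - (z - x))"
        unfolding P x_def y_def z_def e1 e2 ..
      then have "(1 / (2 * A)) * pairing d (Suc i) \<gamma> = ((x - y) - (z - x)) / 2"
        using A0 by simp
      then show ?thesis unfolding e3 x_def[symmetric] y_def[symmetric] z_def[symmetric] by simp
    qed
    have L1: "LC1 d (d * 2^(Suc n)) (\<lambda>\<gamma>. \<gamma> (real j / 2^n) c)"
      using LC1_mono[OF Suc.IH mono] jn by simp
    have L2: "LC1 d (d * 2^(Suc n)) (\<lambda>\<gamma>. \<gamma> (real (Suc j) / 2^n) c)"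
      using LC1_mono[OF Suc.IH[OF jn] mono] .
    have L3: "LC1 d (d * 2^(Suc n)) (\<lambda>\<gamma>. (1 / (2 * A)) * pairing d (Suc i) \<gamma>)"
      by (rule LC1_scale[OF LC1_pair[OF iK]])
    have "LC1 d (d * 2^(Suc n)) (\<lambda>\<gamma>. (1 / (2 * A)) * pairing d (Suc i) \<gamma> + (1/2) * \<gamma> (real j / 2^n) c
          + (1/2) * \<gamma> (real (Suc j) / 2^n) c)"
      by (rule LC1_add[OF LC1_add[OF L3 LC1_scale[OF L1]] LC1_scale[OF L2]])
    then show ?thesis unfolding key[symmetric] .
  qed
qed


definition pv :: "nat \<Rightarrow> nat \<Rightarrow> (real \<Rightarrow> nat \<Rightarrow> real) \<Rightarrow> nat \<Rightarrow> real" where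
  "pv d n \<gamma> j = \<gamma> (real (j div d + 1) / 2^n) (j mod d)"

definition LC2 :: "nat \<Rightarrow> nat \<Rightarrow> ((real \<Rightarrow> nat \<Rightarrow> real) \<Rightarrow> real) \<Rightarrow> bool" where
  "LC2 d n \<phi> \<longleftrightarrow> (\<exists>e. \<forall>\<gamma>\<in>C0 d. \<phi> \<gamma> = (\<Sum>j<d * 2^n. e j * pv d n \<gamma> j))"

lemma LC2_cong:
  assumes "LC2 d n \<psi>" "\<And>\<gamma>. \<gamma> \<in> C0 d \<Longrightarrow> \<phi> \<gamma> = \<psi> \<gamma>"
  shows "LC2 d n \<phi>"
proof -
  obtain e where e: "\<And>\<gamma>. \<gamma> \<in> C0 d \<Longrightarrow> \<psi> \<gamma> = (\<Sum>j<d * 2^n. e j * pv d n \<gamma> j)"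
    using assms(1) by (auto simp: LC2_def)
  show ?thesis unfolding LC2_def
  proof (intro exI[of _ e] ballI)
    fix \<gamma> assume "\<gamma> \<in> C0 d"
    then show "\<phi> \<gamma> = (\<Sum>j<d * 2^n. e j * pv d n \<gamma> j)" by (simp only: e assms(2))
  qed
qed

lemma LC2_add:
  assumes "LC2 d n \<phi>" "LC2 d n \<psi>"
  shows "LC2 d n (\<lambda>\<gamma>. \<phi> \<gamma> + \<psi> \<gamma>)"
proof -
  obtain b where b: "\<And>\<gamma>. \<gamma> \<in> C0 d \<Longrightarrow> \<phi> \<gamma> = (\<Sum>j<d * 2^n. b j * pv d n \<gamma> j)"
    using assms(1) by (auto simp: LC2_def)
  obtain b' where b': "\<And>\<gamma>. \<gamma> \<in> C0 d \<Longrightarrow> \<psi> \<gamma> = (\<Sum>j<d * 2^n. b' j * pv d n \<gamma> j)"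
    using assms(2) by (auto simp: LC2_def)
  show ?thesis unfolding LC2_def
  proof (intro exI[of _ "\<lambda>j. b j + b' j"] ballI)
    fix \<gamma> assume "\<gamma> \<in> C0 d"
    then show "\<phi> \<gamma> + \<psi> \<gamma> = (\<Sum>j<d * 2^n. (b j + b' j) * pv d n \<gamma> j)"
      by (simp add: b b' sum.distrib distrib_right)
  qed
qed

lemma LC2_scale:
  assumes "LC2 d n \<phi>"
  shows "LC2 d n (\<lambda>\<gamma>. a * \<phi> \<gamma>)"
proof -
  obtain b where b: "\<And>\<gamma>. \<gamma> \<in> C0 d \<Longrightarrow> \<phi> \<gamma> = (\<Sum>j<d * 2^n. b j * pv d n \<gamma> j)"
    using assms(1) by (auto simp: LC2_def)
  show ?thesis unfolding LC2_def
  proof (intro exI[of _ "\<lambda>j. a * b j"] ballI)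
    fix \<gamma> assume "\<gamma> \<in> C0 d"
    then show "a * \<phi> \<gamma> = (\<Sum>j<d * 2^n. (a * b j) * pv d n \<gamma> j)"
      by (simp add: b sum_distrib_left mult.assoc)
  qed
qed

lemma LC2_zero: "LC2 d n (\<lambda>\<gamma>. 0)"
  unfolding LC2_def by (intro exI[of _ "\<lambda>_. 0"]) simp

lemma LC2_pt:
  assumes "c < d" "l \<le> 2^n"
  shows "LC2 d n (\<lambda>\<gamma>. \<gamma> (real l / 2^n) c)"
proof (cases "l = 0")
  case True
  show ?thesis
  proof (rule LC2_cong[OF LC2_zero])
    fix \<gamma> :: "real \<Rightarrow> nat \<Rightarrow> real" assume "\<gamma> \<in> C0 d"
    then show "\<gamma> (real l / 2^n) c = 0" using True C0_zero[OF _ assms(1)] by simp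
  qed
next
  case False
  define j0 where "j0 = d * (l - 1) + c"
  have j0: "j0 div d = l - 1" "j0 mod d = c" using assms(1) by (simp_all add: j0_def)
  have j0K: "j0 < d * 2^n"
  proof -
    have "j0 < d * (l - 1) + d" using assms(1) by (simp add: j0_def)
    also have "\<dots> = d * l" using False by (cases l) auto
    also have "\<dots> \<le> d * 2^n" using assms(2) by simp
    finally show ?thesis .
  qed
  have pvj0: "pv d n \<gamma> j0 = \<gamma> (real l / 2^n) c" for \<gamma>
    using False by (simp add: pv_def j0)
  have "(\<Sum>j<d * 2^n. (if j = j0 then 1 else 0) * pv d n \<gamma> j) = \<gamma> (real l / 2^n) c" for \<gamma>
  proof -
    have "(\<Sum>j<d * 2^n. (if j = j0 then 1 else 0) * pv d n \<gamma> j) =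
          (\<Sum>j<d * 2^n. if j = j0 then pv d n \<gamma> j else 0)"
      by (intro sum.cong) auto
    then show ?thesis using j0K pvj0 by simp
  qed
  then show ?thesis unfolding LC2_def by (intro exI[of _ "\<lambda>j. if j = j0 then 1 else 0"]) simp
qed

lemma LC2_pt_lower:
  assumes "c < d" "l \<le> 2^m" "m \<le> n"
  shows "LC2 d n (\<lambda>\<gamma>. \<gamma> (real l / 2^m) c)"
proof -
  have e: "real l / 2^m = real (l * 2^(n-m)) / (2::real)^n"
  proof -
    have "(2::real)^n = 2^m * 2^(n-m)" using assms(3) by (simp flip: power_add)
    then show ?thesis by simp
  qed
  have "l * 2^(n-m) \<le> 2^m * 2^(n-m)" using assms(2) by simp
  also have "\<dots> = 2^n" using assms(3) by (simp flip: power_add)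
  finally have "LC2 d n (\<lambda>\<gamma>. \<gamma> (real (l * 2^(n-m)) / 2^n) c)" by (rule LC2_pt[OF assms(1)])
  then show ?thesis unfolding e .
qed

lemma LC2_pairing:
  assumes "d > 0" "i div d + 1 \<le> 2^n"
  shows "LC2 d n (pairing d (Suc i))"
proof -
  define c where "c = i mod d"
  have c: "c < d" using assms(1) by (simp add: c_def)
  show ?thesis
  proof (cases "i div d = 0")
    case True
    have P: "pairing d (Suc i) \<gamma> = \<gamma> 1 c - \<gamma> 0 c" for \<gamma>
      using True stieltjes_haar1[of "\<lambda>t. \<gamma> t c"] by (simp add: pairing_gen c_def)
    have "LC2 d n (\<lambda>\<gamma>. \<gamma> (real (2^n) / 2^n) c)" using c by (intro LC2_pt) auto
    then show ?thesis
    proof (rule LC2_cong)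
      fix \<gamma> :: "real \<Rightarrow> nat \<Rightarrow> real" assume "\<gamma> \<in> C0 d"
      then show "pairing d (Suc i) \<gamma> = \<gamma> (real (2^n) / 2^n) c"
        using P C0_zero[OF _ c] by simp
    qed
  next
    case False
    then have "2 \<le> i div d + 1" by simp
    then obtain m j where mj: "i div d + 1 = 2^m + Suc j" "Suc j \<le> 2^m"
      using dyadic_decomp by blast
    have idiv: "i div d = 2^m + j" using mj by simp
    have "(2::nat)^m < 2^n" using mj assms(2) by linarith
    then have mn: "m + 1 \<le> n" using power_less_imp_less_exp[of "2::nat" m n] by simp
    define A where "A = (2::real) powr (real m / 2)"
    have P: "pairing d (Suc i) \<gamma> = A * ((\<gamma> (real (2*j+1) / 2^(m+1)) c - \<gamma> (real (2*j) / 2^(m+1)) c)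
                         - (\<gamma> (real (2*j+2) / 2^(m+1)) c - \<gamma> (real (2*j+1) / 2^(m+1)) c))" for \<gamma>
      using pairing_mk[OF idiv mj(2), of \<gamma>] by (simp add: c_def A_def)
    have b: "2*j+2 \<le> 2^(m+1)" using mj(2) by simp
    have L1: "LC2 d n (\<lambda>\<gamma>. \<gamma> (real (2*j+1) / 2^(m+1)) c)" using b by (intro LC2_pt_lower[OF c _ mn]) simp
    have L2: "LC2 d n (\<lambda>\<gamma>. \<gamma> (real (2*j) / 2^(m+1)) c)" using b by (intro LC2_pt_lower[OF c _ mn]) simp
    have L3: "LC2 d n (\<lambda>\<gamma>. \<gamma> (real (2*j+2) / 2^(m+1)) c)" using b by (intro LC2_pt_lower[OF c _ mn]) simp
    have "LC2 d n (\<lambda>\<gamma>. (2*A) * \<gamma> (real (2*j+1) / 2^(m+1)) c + (- A) * \<gamma> (real (2*j) / 2^(m+1)) c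
           + (- A) * \<gamma> (real (2*j+2) / 2^(m+1)) c)"
      by (rule LC2_add[OF LC2_add[OF LC2_scale[OF L1] LC2_scale[OF L2]] LC2_scale[OF L3]])
    then show ?thesis
    proof (rule LC2_cong)
      fix \<gamma> :: "real \<Rightarrow> nat \<Rightarrow> real"
      show "pairing d (Suc i) \<gamma> = (2*A) * \<gamma> (real (2*j+1) / 2^(m+1)) c + (- A) * \<gamma> (real (2*j) / 2^(m+1)) c
           + (- A) * \<gamma> (real (2*j+2) / 2^(m+1)) c"
        unfolding P by (simp add: algebra_simps)
    qed
  qed
qed


theorem lemma1p1:
  fixes d :: nat
  assumes "d \<ge> 1"
  shows "Ycyl d = Ytilde d"
proof (intro equalityI subsetI)
  fix F assume "F \<in> Ycyl d"
  then obtain k n s f where kk: "k \<ge> 1" and s0: "0 < s 0" and smono: "\<forall>i j. i < j \<and> j < k \<longrightarrow> s i < s j"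
    and sk: "s (k - 1) = 1" and sl: "\<forall>i<k. \<exists>l\<in>{1..(2::nat)^n}. s i = real l / 2^n"
    and f: "Cinf_p (d * k) f"
    and F: "F = (\<lambda>\<gamma>. if \<gamma> \<in> C0 d then f (\<lambda>i. if i < d * k then \<gamma> (s (i div d)) (i mod d) else 0) else 0)"
    unfolding Ycyl_def by blast
  define K where "K = d * 2^n"
  have "\<forall>j. j < d * k \<longrightarrow> (\<exists>b. \<forall>\<gamma>\<in>C0 d. \<gamma> (s (j div d)) (j mod d) = (\<Sum>i<K. b i * pairing d (Suc i) \<gamma>))"
  proof (intro allI impI)
    fix j assume j: "j < d * k"
    have jd: "j div d < k" using j assms by (simp add: div_less_iff_less_mult mult.commute)
    have jm: "j mod d < d" using assms by simp
    obtain l where l: "l \<in> {1..2^n}" "s (j div d) = real l / 2^n" using sl jd by blast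
    have "LC1 d K (\<lambda>\<gamma>. \<gamma> (real l / 2^n) (j mod d))"
      unfolding K_def by (rule LC1_points[OF jm]) (use l in auto)
    then show "\<exists>b. \<forall>\<gamma>\<in>C0 d. \<gamma> (s (j div d)) (j mod d) = (\<Sum>i<K. b i * pairing d (Suc i) \<gamma>)"
      unfolding LC1_def l(2) .
  qed
  then obtain a where a: "\<And>j \<gamma>. j < d * k \<Longrightarrow> \<gamma> \<in> C0 d \<Longrightarrow>
      \<gamma> (s (j div d)) (j mod d) = (\<Sum>i<K. a j i * pairing d (Suc i) \<gamma>)"
    by metis
  define f' where "f' = (\<lambda>y. f (linmap a (d * k) K y))"
  have f': "Cinf_p K f'" unfolding f'_def by (rule Cinf_p_lin[OF f])
  have K1: "K \<ge> 1" using assms by (simp add: K_def)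
  have "F = (\<lambda>\<gamma>. if \<gamma> \<in> C0 d then f' (\<lambda>i. if i < K then pairing d (Suc i) \<gamma> else 0) else 0)"
  proof
    fix \<gamma>
    show "F \<gamma> = (if \<gamma> \<in> C0 d then f' (\<lambda>i. if i < K then pairing d (Suc i) \<gamma> else 0) else 0)"
    proof (cases "\<gamma> \<in> C0 d")
      case True
      have "linmap a (d * k) K (\<lambda>i. if i < K then pairing d (Suc i) \<gamma> else 0) =
            (\<lambda>i. if i < d * k then \<gamma> (s (i div d)) (i mod d) else 0)"
      proof
        fix j
        show "linmap a (d * k) K (\<lambda>i. if i < K then pairing d (Suc i) \<gamma> else 0) j =
              (if j < d * k then \<gamma> (s (j div d)) (j mod d) else 0)"
        proof (cases "j < d * k")
          case True
          have "(\<Sum>i<K. a j i * (if i < K then pairing d (Suc i) \<gamma> else 0)) = (\<Sum>i<K. a j i * pairing d (Suc i) \<gamma>)"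
            by (intro sum.cong) auto
          then show ?thesis using True a[OF True \<open>\<gamma> \<in> C0 d\<close>] by (simp add: linmap_def)
        next
          case False
          then show ?thesis by (simp add: linmap_def)
        qed
      qed
      then show ?thesis using True by (simp add: F f'_def)
    next
      case False
      then show ?thesis by (simp add: F)
    qed
  qed
  then show "F \<in> Ytilde d" unfolding Ytilde_def using K1 f' by blast
next
  fix F assume "F \<in> Ytilde d"
  then obtain k f where kk: "k \<ge> 1" and f: "Cinf_p k f"
    and F: "F = (\<lambda>\<gamma>. if \<gamma> \<in> C0 d then f (\<lambda>i. if i < k then pairing d (Suc i) \<gamma> else 0) else 0)"
    unfolding Ytilde_def by blast
  define n where "n = k"
  define K where "K = d * 2^n"
  define s where "s = (\<lambda>i::nat. real (i + 1) / 2^n)"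
  have d0: "d > 0" using assms by simp
  have "\<forall>i. i < k \<longrightarrow> (\<exists>e. \<forall>\<gamma>\<in>C0 d. pairing d (Suc i) \<gamma> = (\<Sum>j<K. e j * pv d n \<gamma> j))"
  proof (intro allI impI)
    fix i assume i: "i < k"
    have h1: "i div d \<le> i" by simp
    have h2: "k < 2^k" by simp
    have "i div d + 1 \<le> 2^n" using h1 h2 i unfolding n_def by linarith
    then have "LC2 d n (pairing d (Suc i))" by (rule LC2_pairing[OF d0])
    then show "\<exists>e. \<forall>\<gamma>\<in>C0 d. pairing d (Suc i) \<gamma> = (\<Sum>j<K. e j * pv d n \<gamma> j)"
      unfolding LC2_def K_def .
  qed
  then obtain a where a: "\<And>i \<gamma>. i < k \<Longrightarrow> \<gamma> \<in> C0 d \<Longrightarrow>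
      pairing d (Suc i) \<gamma> = (\<Sum>j<K. a i j * pv d n \<gamma> j)"
    by metis
  define f' where "f' = (\<lambda>y. f (linmap a k K y))"
  have f': "Cinf_p (d * 2^n) f'" unfolding f'_def K_def by (rule Cinf_p_lin[OF f])
  have c1: "(2::nat)^n \<ge> 1" by simp
  have c2: "0 < s 0" by (simp add: s_def)
  have c3: "\<forall>i j. i < j \<and> j < 2^n \<longrightarrow> s i < s j"
    by (auto simp: s_def divide_less_cancel)
  have c4: "s (2^n - 1) = 1" by (simp add: s_def)
  have c5: "\<forall>i<2^n. \<exists>l\<in>{1..(2::nat)^n}. s i = real l / 2^n"
    by (auto simp: s_def intro!: bexI[of _ "Suc i" for i])
  have "F = (\<lambda>\<gamma>. if \<gamma> \<in> C0 d then f' (\<lambda>i. if i < d * 2^n then \<gamma> (s (i div d)) (i mod d) else 0) else 0)"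
  proof
    fix \<gamma>
    show "F \<gamma> = (if \<gamma> \<in> C0 d then f' (\<lambda>i. if i < d * 2^n then \<gamma> (s (i div d)) (i mod d) else 0) else 0)"
    proof (cases "\<gamma> \<in> C0 d")
      case True
      have "linmap a k K (\<lambda>i. if i < d * 2^n then \<gamma> (s (i div d)) (i mod d) else 0) =
            (\<lambda>i. if i < k then pairing d (Suc i) \<gamma> else 0)"
      proof
        fix i
        show "linmap a k K (\<lambda>i. if i < d * 2^n then \<gamma> (s (i div d)) (i mod d) else 0) i =
              (if i < k then pairing d (Suc i) \<gamma> else 0)"
        proof (cases "i < k")
          case True
          have "(\<Sum>j<K. a i j * (if j < d * 2^n then \<gamma> (s (j div d)) (j mod d) else 0)) = (\<Sum>j<K. a i j * pv d n \<gamma> j)"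
            by (intro sum.cong) (auto simp: K_def pv_def s_def)
          then show ?thesis using True a[OF True \<open>\<gamma> \<in> C0 d\<close>] by (simp add: linmap_def)
        next
          case False
          then show ?thesis by (simp add: linmap_def)
        qed
      qed
      then show ?thesis using True by (simp add: F f'_def)
    next
      case False
      then show ?thesis by (simp add: F)
    qed
  qed
  then show "F \<in> Ycyl d" unfolding Ycyl_def using c1 c2 c3 c4 c5 f' by blast
qed

end
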